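(* For every $\tau\in\mathbb{H}^2$, $$\theta[\tfrac15;\tfrac15]^5-\theta[\tfrac15;\tfrac35]^5+\theta[\tfrac15;1]^5-\theta[\tfrac15;\tfrac75]^5+\theta[\tfrac15;\tfrac95]^5=0,$$ and $$\theta[\tfrac35;\tfrac15]^5-\theta[\tfrac35;\tfrac35]^5+\theta[\tfrac35;1]^5-\theta[\tfrac35;\tfrac75]^5+\theta[\tfrac35;\tfrac95]^5=0.$$
   Context: Let $\mathbb{H}^2=\{\tau\in\mathbb{C}:\Im\tau>0\}$. For a characteristic $(\epsilon,\epsilon')\in\mathbb{R}^2$, the theta function with characteristic is $$\theta[\epsilon;\epsilon'](\zeta,\tau)=\sum_{n\in\mathbb{Z}}\exp\Big(2\pi i\Big[\tfrac12\big(n+\tfrac{\epsilon}{2}\big)^2\tau+\big(n+\tfrac{\epsilon}{2}\big)\big(\zeta+\tfrac{\epsilon'}{2}\big)\Big]\Big),\quad (\zeta,\tau)\in\mathbb{C}\times\mathbb{H}^2,$$ (usually written with the column $\left[\begin{smallmatrix}\epsilon\\ \epsilon'\end{smallmatrix}\right]$), and the theta constant is $\theta[\epsilon;\epsilon']=\theta[\epsilon;\epsilon'](0,\tau)$, regarded as a function of $\tau$. Here $\theta[\epsilon;\epsilon']^5$ denotes the fifth power of the theta constant. *)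

theory Defs
  imports "HOL-Analysis.Analysis"
begin

definition theta_char :: "real \<Rightarrow> real \<Rightarrow> complex \<Rightarrow> complex \<Rightarrow> complex" where
  "theta_char eps eps' zeta tau =
     (\<Sum>\<^sub>\<infinity> n::int. exp (2 * pi * \<i> *
        ((1/2) * (of_int n + of_real eps / 2)^2 * tau
         + (of_int n + of_real eps / 2) * (zeta + of_real eps' / 2))))"

definition theta_const :: "real \<Rightarrow> real \<Rightarrow> complex \<Rightarrow> complex" where
  "theta_const eps eps' tau = theta_char eps eps' 0 tau"

end

theory Submission
  imports Defs
begin

definition tm :: "real \<Rightarrow> real \<Rightarrow> complex \<Rightarrow> int \<Rightarrow> complex" where
 "tm e e' tau n = exp (2 * pi * \<i> * ((1/2) * (of_int n + of_real e / 2)^2 * tau + (of_int n + of_real e / 2) * (0 + of_real e' / 2)))"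

lemma theta_tm: "theta_const e e' tau = infsum (tm e e' tau) UNIV"
  unfolding theta_const_def theta_char_def tm_def ..

lemma tm_alt: "tm e e' tau n = exp (pi * \<i> * tau * of_real ((real_of_int n + e/2)^2) + pi * \<i> * of_real (e' * (real_of_int n + e/2)))"
  unfolding tm_def by (simp add: algebra_simps power2_eq_square)

lemma norm_tm: "norm (tm e e' tau n) = exp (- pi * Im tau * (real_of_int n + e/2)^2)"
  by (simp add: tm_alt)

lemma geom_int:
  fixes r :: real assumes "0 \<le> r" "r < 1"
  shows "(\<lambda>m::int. r ^ nat \<bar>m\<bar>) summable_on UNIV"
proof -
  have s: "(\<lambda>n::nat. r ^ n) summable_on UNIV"
    using assms by (subst summable_on_UNIV_nonneg_real_iff) (auto intro: summable_geometric)
  have s1: "(\<lambda>m::int. r ^ nat \<bar>m\<bar>) summable_on (int ` UNIV)"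
    by (subst summable_on_reindex) (use s in \<open>auto simp: o_def\<close>)
  have s2: "(\<lambda>m::int. r ^ nat \<bar>m\<bar>) summable_on ((\<lambda>n. - int n - 1) ` UNIV)"
  proof (subst summable_on_reindex)
    show "inj_on (\<lambda>n. - int n - 1) UNIV" by (auto simp: inj_on_def)
    have "(\<lambda>n::nat. r * r ^ n) summable_on UNIV" using s by (rule summable_on_cmult_right)
    then show "((\<lambda>m::int. r ^ nat \<bar>m\<bar>) \<circ> (\<lambda>n. - int n - 1)) summable_on UNIV"
      by (simp add: o_def nat_add_distrib)
  qed
  have U: "UNIV = int ` UNIV \<union> (\<lambda>n. - int n - 1) ` UNIV"
    by (auto simp: image_def) presburger
  have D: "int ` UNIV \<inter> (\<lambda>n. - int n - 1) ` UNIV = {}" by auto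
  show ?thesis using summable_on_Un_disjoint[OF s1 s2 D] U by metis
qed


lemma sq_bound: "real_of_int \<bar>n\<bar> / 2 - d^2 \<le> (real_of_int n + d)^2"
proof -
  have "real_of_int \<bar>n\<bar> \<le> (real_of_int n)^2"
  proof -
    have "\<bar>n\<bar> \<le> \<bar>n\<bar> * \<bar>n\<bar>"
    proof (cases "n = 0")
      case False
      then have "1 \<le> \<bar>n\<bar>" by linarith
      from mult_right_mono[OF this abs_ge_zero[of n]] show ?thesis by simp
    qed simp
    then have "\<bar>n\<bar> \<le> n^2" by (simp add: power2_eq_square abs_mult[symmetric])
    then show ?thesis by (metis of_int_le_iff of_int_power)
  qed
  moreover have "0 \<le> (real_of_int n + 2*d)^2" by simp
  ultimately show ?thesis by (simp add: power2_eq_square algebra_simps)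
qed

lemma tm_norm_summable:
  assumes "Im tau > 0"
  shows "(\<lambda>n. norm (tm e e' tau n)) summable_on UNIV"
proof -
  define c where "c = pi * Im tau"
  have c: "c > 0" using assms by (simp add: c_def)
  define d where "d = e/2"
  have g: "(\<lambda>m::int. exp (c*d^2) * exp (-c/2) ^ nat \<bar>m\<bar>) summable_on UNIV"
    by (rule summable_on_cmult_right, rule geom_int) (use c in auto)
  show ?thesis
  proof (rule summable_on_comparison_test[OF g])
    fix n :: int
    have "exp (-c/2) ^ nat \<bar>n\<bar> = exp (real (nat \<bar>n\<bar>) * (-c/2))"
      by (simp only: exp_of_nat_mult)
    also have "real (nat \<bar>n\<bar>) = real_of_int \<bar>n\<bar>" by simp
    finally have e1: "exp (c*d^2) * exp (-c/2) ^ nat \<bar>n\<bar> = exp (c*d^2 - c * (real_of_int \<bar>n\<bar> / 2))"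
      by (simp add: exp_add[symmetric] exp_diff algebra_simps)
    have "- c * (real_of_int n + d)^2 \<le> c*d^2 - c * (real_of_int \<bar>n\<bar> / 2)"
      using mult_left_mono[OF sq_bound[of n d], of c] c by (simp add: algebra_simps)
    then have "exp (- c * (real_of_int n + d)^2) \<le> exp (c*d^2 - c * (real_of_int \<bar>n\<bar> / 2))" by simp
    moreover have "norm (tm e e' tau n) = exp (- c * (real_of_int n + d)^2)" by (simp add: norm_tm c_def d_def)
    ultimately show "norm (tm e e' tau n) \<le> exp (c*d^2) * exp (-c/2) ^ nat \<bar>n\<bar>"
      by (simp only: e1)
  qed auto
qed


lemma tm_summable: "Im tau > 0 \<Longrightarrow> tm e e' tau summable_on UNIV"
  using tm_norm_summable summable_on_iff_abs_summable_on_complex by blast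

lemma theta_pow5:
  assumes "Im tau > 0"
  shows "theta_const e e' tau ^ 5 = infsum (\<lambda>p. \<Prod>j<5. tm e e' tau (p j)) (PiE {..<5::nat} (\<lambda>_. UNIV))"
proof -
  have "infsum (\<lambda>p. \<Prod>j<5. tm e e' tau (p j)) (PiE {..<5::nat} (\<lambda>_. UNIV))
        = (\<Prod>j<5::nat. infsum (tm e e' tau) UNIV)"
    by (rule infsum_prod_PiE_abs) (use tm_norm_summable[OF assms] in auto)
  then show ?thesis by (simp add: theta_tm)
qed

lemma norm_infsum_pos:
  assumes "Im tau > 0"
  shows "infsum (\<lambda>n. norm (tm e e' tau n)) UNIV > 0"
proof -
  have "infsum (\<lambda>n. norm (tm e e' tau n)) {0} \<le> infsum (\<lambda>n. norm (tm e e' tau n)) UNIV"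
    by (rule infsum_mono2) (use tm_norm_summable[OF assms] in auto)
  moreover have "infsum (\<lambda>n. norm (tm e e' tau n)) {0} > 0" by (simp add: norm_tm)
  ultimately show ?thesis by linarith
qed

lemma prod_summable:
  assumes "Im tau > 0"
  shows "(\<lambda>p. \<Prod>j<5. tm e e' tau (p j)) summable_on (PiE {..<5::nat} (\<lambda>_. UNIV))"
proof -
  have eq: "infsum (\<lambda>p. \<Prod>j<5. norm (tm e e' tau (p j))) (PiE {..<5::nat} (\<lambda>_. UNIV))
        = (\<Prod>j<5::nat. infsum (\<lambda>n. norm (tm e e' tau n)) UNIV)"
    by (rule infsum_prod_PiE_abs) (use tm_norm_summable[OF assms] in auto)
  have "(\<Prod>j<5::nat. infsum (\<lambda>n. norm (tm e e' tau n)) UNIV) \<noteq> 0"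
    using norm_infsum_pos[OF assms, of e e'] by simp
  then have "(\<lambda>p. \<Prod>j<5. norm (tm e e' tau (p j))) summable_on (PiE {..<5::nat} (\<lambda>_. UNIV))"
    using eq infsum_not_exists by force
  then have "(\<lambda>p. norm (\<Prod>j<5. tm e e' tau (p j))) summable_on (PiE {..<5::nat} (\<lambda>_. UNIV))"
    by (simp add: prod_norm)
  then show ?thesis by (rule abs_summable_summable)
qed


lemma u10:
  assumes "odd a"
  shows "exp (pi * \<i> * of_real ((of_int N + of_int a / 2) / 5)) ^ 10 = -1"
proof -
  obtain m where a: "a = 2*m+1" using assms oddE by blast
  have "exp (pi * \<i> * of_real ((of_int N + of_int a / 2) / 5)) ^ 10
      = exp (of_nat 10 * (pi * \<i> * of_real ((of_int N + of_int a / 2) / 5)))"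
    by (simp only: exp_of_nat_mult)
  also have "of_nat 10 * (pi * \<i> * of_real ((of_int N + of_int a / 2) / 5)) = (2 * of_int (N+m) + 1) * pi * \<i>"
    by (simp add: a field_simps)
  also have "exp ((2 * of_int (N+m) + 1) * pi * \<i>) = -1"
    by (rule exp_integer_2pi_plus1) simp
  finally show ?thesis .
qed

lemma u2:
  assumes "\<not> 5 dvd (2*N + a)"
  shows "exp (pi * \<i> * of_real ((of_int N + of_int a / 2) / 5)) ^ 2 \<noteq> -1"
proof
  define L where "L = (real_of_int N + real_of_int a / 2)"
  assume h: "exp (pi * \<i> * of_real ((of_int N + of_int a / 2) / 5)) ^ 2 = -1"
  have "exp (pi * \<i> * of_real ((of_int N + of_int a / 2) / 5)) ^ 2
      = exp (of_nat 2 * (pi * \<i> * of_real ((of_int N + of_int a / 2) / 5)))"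
    by (simp only: exp_of_nat_mult)
  with h have "exp (of_nat 2 * (pi * \<i> * of_real L / 5)) = - 1" by (simp add: L_def)
  then have "exp (of_nat 2 * (pi * \<i> * of_real L / 5) - pi * \<i>) = 1"
    by (simp add: exp_diff)
  then obtain n :: int where "Im (of_nat 2 * (pi * \<i> * of_real L / 5) - pi * \<i>) = of_int (2*n) * pi"
    unfolding exp_eq_1 by blast
  then have "2 * pi * L / 5 - pi = 2 * n * pi" by simp
  then have "(2 * L / 5 - 1) * pi = (2 * n) * pi" by (simp add: algebra_simps)
  then have "2 * L / 5 - 1 = 2 * n" by simp
  then have "real_of_int (2*N + a) = real_of_int (5 * (2*n+1))" by (simp add: L_def field_simps)
  then have "2*N + a = 5 * (2*n+1)" by (simp only: of_int_eq_iff)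
  with assms show False by simp
qed

lemma H_neg_poly:
  fixes u v :: complex
  assumes "u^10 = -1" "v = - (u^9)"
  shows "v - v^3 + v^5 - v^7 + v^9 = -(u - u^3 + u^5 - u^7 + u^9)"
proof -
  have h: "u^(10*m + r) = (-1)^m * u^r" for m r
    using assms(1) by (simp add: power_add power_mult)
  have "v^3 = - (u^(10*2+7))" "v^5 = - (u^(10*4+5))" "v^7 = - (u^(10*6+3))" "v^9 = - (u^(10*8+1))"
    unfolding assms(2) by (simp_all add: power_mult_distrib power_mult[symmetric])
  then have "v^3 = - (u^7)" "v^5 = - (u^5)" "v^7 = - (u^3)" "v^9 = - u"
    unfolding h by simp_all
  then show ?thesis using assms(2) by simp
qed

lemma H_zero_poly:
  fixes u :: complex
  assumes "u^10 = -1" "u^2 \<noteq> -1"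
  shows "u - u^3 + u^5 - u^7 + u^9 = 0"
proof -
  have "(1 + u^2) * (u - u^3 + u^5 - u^7 + u^9) = u * (1 + u^10)" by algebra
  also have "\<dots> = 0" using assms by simp
  finally show ?thesis using assms(2)
    by (metis add_eq_0_iff mult_eq_0_iff add.commute)
qed


lemma sum5: "(\<Sum>k<5::nat. f k) = f 0 + f 1 + f 2 + f 3 + f 4"
  by (simp add: eval_nat_numeral)

definition Nsum :: "(nat \<Rightarrow> int) \<Rightarrow> int" where "Nsum p = (\<Sum>j<5. p j)"
definition sig :: "int \<Rightarrow> (nat \<Rightarrow> int) \<Rightarrow> (nat \<Rightarrow> int)" where
  "sig a p = (if 5 dvd (2 * Nsum p + a) then (\<lambda>j\<in>{..<5}. p j - (2 * Nsum p + a) div 5) else p)"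
definition Qf :: "real \<Rightarrow> (nat \<Rightarrow> int) \<Rightarrow> real" where "Qf e p = (\<Sum>j<5. (real_of_int (p j) + e/2)^2)"
definition Lf :: "real \<Rightarrow> (nat \<Rightarrow> int) \<Rightarrow> real" where "Lf e p = (\<Sum>j<5. (real_of_int (p j) + e/2))"
definition Hp :: "complex \<Rightarrow> complex" where "Hp u = u - u^3 + u^5 - u^7 + u^9"
definition gfun :: "int \<Rightarrow> complex \<Rightarrow> (nat \<Rightarrow> int) \<Rightarrow> complex" where
  "gfun a tau p = (\<Sum>k<5::nat. (-1)^k * (\<Prod>j<5::nat. tm (of_int a / 5) ((2 * real k + 1) / 5) tau (p j)))"

lemma prod_tm: "(\<Prod>j<5::nat. tm e e' tau (p j)) = exp (pi * \<i> * tau * of_real (Qf e p) + pi * \<i> * of_real (e' * Lf e p))"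
proof -
  have "(\<Prod>j<5::nat. tm e e' tau (p j)) = exp (\<Sum>j<5::nat. (pi * \<i> * tau * of_real ((real_of_int (p j) + e/2)^2) + pi * \<i> * of_real (e' * (real_of_int (p j) + e/2))))"
    by (simp add: exp_sum tm_alt)
  also have "(\<Sum>j<5::nat. (pi * \<i> * tau * of_real ((real_of_int (p j) + e/2)^2) + pi * \<i> * of_real (e' * (real_of_int (p j) + e/2))))
     = pi * \<i> * tau * of_real (Qf e p) + pi * \<i> * of_real (e' * Lf e p)"
    unfolding Qf_def Lf_def sum5 by (simp add: algebra_simps)
  finally show ?thesis .
qed

lemma Lf_eq: "Lf (of_int a / 5) p = of_int (Nsum p) + of_int a / 2"
  unfolding Lf_def Nsum_def by (simp add: sum5)

lemma exp_odd: "exp (pi * \<i> * of_real ((2 * real k + 1) / 5 * L)) = exp (pi * \<i> * of_real (L / 5)) ^ (2*k+1)"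
proof -
  have "exp (pi * \<i> * of_real (L / 5)) ^ (2*k+1) = exp (of_nat (2*k+1) * (pi * \<i> * of_real (L / 5)))"
    by (simp only: exp_of_nat_mult)
  also have "of_nat (2*k+1) * (pi * \<i> * of_real (L / 5)) = pi * \<i> * of_real ((2 * real k + 1) / 5 * L)"
    by simp
  finally show ?thesis by simp
qed

lemma g_form: "gfun a tau p = exp (pi * \<i> * tau * of_real (Qf (of_int a / 5) p)) * Hp (exp (pi * \<i> * of_real (Lf (of_int a / 5) p / 5)))"
proof -
  define u where "u = exp (pi * \<i> * of_real (Lf (of_int a / 5) p / 5))"
  define E where "E = exp (pi * \<i> * tau * of_real (Qf (of_int a / 5) p))"
  have "\<And>k. (\<Prod>j<5::nat. tm (of_int a / 5) ((2 * real k + 1) / 5) tau (p j)) = E * u^(2*k+1)"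
    unfolding prod_tm exp_add exp_odd u_def E_def ..
  then have "gfun a tau p = (\<Sum>k<5::nat. (-1)^k * (E * u^(2*k+1)))"
    unfolding gfun_def by simp
  also have "\<dots> = E * Hp u" unfolding sum5 Hp_def by (simp add: ring_distribs)
  finally show ?thesis by (simp add: u_def E_def)
qed


lemma sig_in: "p \<in> PiE {..<5} (\<lambda>_. UNIV) \<Longrightarrow> sig a p \<in> PiE {..<5} (\<lambda>_. UNIV)"
  by (auto simp: sig_def)

lemma sig_dvd:
  assumes "2 * Nsum p + a = 5 * t"
  shows "sig a p = (\<lambda>j\<in>{..<5}. p j - t)" "Nsum (sig a p) = Nsum p - 5 * t"
proof -
  show 1: "sig a p = (\<lambda>j\<in>{..<5}. p j - t)" unfolding sig_def using assms by simp
  show "Nsum (sig a p) = Nsum p - 5 * t" unfolding 1 Nsum_def sum5 by simp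
qed

lemma sig_inv:
  assumes p: "p \<in> PiE {..<5} (\<lambda>_. UNIV)"
  shows "sig a (sig a p) = p"
proof (cases "5 dvd (2 * Nsum p + a)")
  case True
  then obtain t where t: "2 * Nsum p + a = 5 * t" by blast
  have s1: "sig a p = (\<lambda>j\<in>{..<5}. p j - t)" "Nsum (sig a p) = Nsum p - 5 * t"
    using sig_dvd[OF t] by auto
  have t2: "2 * Nsum (sig a p) + a = 5 * (-t)" using s1(2) t by simp
  have "sig a (sig a p) = (\<lambda>j\<in>{..<5}. sig a p j - (-t))" using sig_dvd(1)[OF t2] .
  also have "\<dots> = p"
  proof
    fix j show "(\<lambda>j\<in>{..<5}. sig a p j - (-t)) j = p j"
    proof (cases "j < 5")
      case True
      then show ?thesis unfolding s1(1) by simp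
    next
      case False
      then have "j \<notin> {..<5}" by simp
      then show ?thesis using PiE_arb[OF p, of j] by simp
    qed
  qed
  finally show ?thesis .
next
  case False
  then show ?thesis by (simp add: sig_def)
qed

lemma refl_quad:
  fixes x0 x1 x2 x3 x4 t :: real
  assumes "5 * t = 2 * (x0 + x1 + x2 + x3 + x4)"
  shows "(x0 - t)^2 + (x1 - t)^2 + (x2 - t)^2 + (x3 - t)^2 + (x4 - t)^2 = x0^2 + x1^2 + x2^2 + x3^2 + x4^2"
proof -
  have "(x0 - t)^2 + (x1 - t)^2 + (x2 - t)^2 + (x3 - t)^2 + (x4 - t)^2
      = x0^2 + x1^2 + x2^2 + x3^2 + x4^2 + t * (5 * t - 2 * (x0 + x1 + x2 + x3 + x4))"
    by (simp add: power2_eq_square algebra_simps)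
  then show ?thesis using assms by simp
qed

lemma shift_eq: "real_of_int (q - t) + e / 2 = (real_of_int q + e / 2) - real_of_int t"
  by simp

lemma g_anti:
  assumes "odd a" and p: "p \<in> PiE {..<5} (\<lambda>_. UNIV)"
  shows "gfun a tau (sig a p) = - gfun a tau p"
proof (cases "5 dvd (2 * Nsum p + a)")
  case True
  then obtain t where t: "2 * Nsum p + a = 5 * t" by blast
  have s1: "sig a p = (\<lambda>j\<in>{..<5}. p j - t)" "Nsum (sig a p) = Nsum p - 5 * t"
    using sig_dvd[OF t] by auto
  have tr: "real_of_int a = 5 * real_of_int t - 2 * (real_of_int (p 0) + real_of_int (p 1) + real_of_int (p 2) + real_of_int (p 3) + real_of_int (p 4))"
  proof -
    have "real_of_int (2 * Nsum p + a) = real_of_int (5 * t)" using t by simp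
    then show ?thesis unfolding Nsum_def sum5 by simp
  qed
  have Q: "Qf (of_int a / 5) (sig a p) = Qf (of_int a / 5) p"
  proof -
    have "(5::real) * of_int t = 2 * ((of_int (p 0) + of_int a / 5 / 2) + (of_int (p 1) + of_int a / 5 / 2) + (of_int (p 2) + of_int a / 5 / 2) + (of_int (p 3) + of_int a / 5 / 2) + (of_int (p 4) + of_int a / 5 / 2))"
      using tr by (simp add: field_simps)
    from refl_quad[OF this] show ?thesis
      unfolding Qf_def sum5 s1(1) by (simp only: restrict_apply' lessThan_iff shift_eq)
  qed
  have L: "Lf (of_int a / 5) (sig a p) = - Lf (of_int a / 5) p"
  proof -
    have "real_of_int (2 * Nsum p + a) = real_of_int (5 * t)" using t by simp
    then show ?thesis unfolding Lf_eq s1(2) by simp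
  qed
  define u where "u = exp (pi * \<i> * of_real (Lf (of_int a / 5) p / 5))"
  have u10': "u^10 = -1" unfolding u_def Lf_eq by (rule u10[OF assms(1)])
  have "exp (pi * \<i> * of_real (Lf (of_int a / 5) (sig a p) / 5)) = inverse u"
    unfolding L u_def by (simp add: exp_minus[symmetric])
  also have "inverse u = - (u^9)"
  proof -
    have "u * u^9 = u^(1+9)" by (simp only: power_add power_one_right)
    also have "\<dots> = -1" using u10' by simp
    finally have "u * u^9 = -1" .
    then have "u * (- (u^9)) = 1" by simp
    then show ?thesis by (rule inverse_unique)
  qed
  finally have eq: "exp (pi * \<i> * of_real (Lf (of_int a / 5) (sig a p) / 5)) = - (u^9)" .
  have "Hp (exp (pi * \<i> * of_real (Lf (of_int a / 5) (sig a p) / 5))) = - Hp u"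
    unfolding eq Hp_def by (rule H_neg_poly[OF u10' refl])
  then show ?thesis unfolding g_form Q u_def by simp
next
  case False
  then have "sig a p = p" by (simp add: sig_def)
  moreover have "Hp (exp (pi * \<i> * of_real (Lf (of_int a / 5) p / 5))) = 0"
    unfolding Hp_def Lf_eq by (rule H_zero_poly[OF u10[OF assms(1)] u2[OF False]])
  ultimately show ?thesis unfolding g_form by simp
qed


lemma infsum_sum_fin:
  fixes f :: "'k \<Rightarrow> 'a \<Rightarrow> complex"
  assumes "finite K" "\<And>k. k \<in> K \<Longrightarrow> f k summable_on A"
  shows "infsum (\<lambda>x. \<Sum>k\<in>K. f k x) A = (\<Sum>k\<in>K. infsum (f k) A) \<and> (\<lambda>x. \<Sum>k\<in>K. f k x) summable_on A"
  using assms
proof (induction K rule: finite_induct)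
  case empty
  then show ?case by simp
next
  case (insert k K)
  then have IH: "infsum (\<lambda>x. \<Sum>k\<in>K. f k x) A = (\<Sum>k\<in>K. infsum (f k) A)" "(\<lambda>x. \<Sum>k\<in>K. f k x) summable_on A"
    and fk: "f k summable_on A" by auto
  show ?case using insert.hyps IH fk
    by (simp add: infsum_add summable_on_add)
qed

lemma main5:
  assumes "odd a" "Im tau > 0"
  shows "(\<Sum>k<5::nat. (-1)^k * theta_const (of_int a / 5) ((2 * real k + 1) / 5) tau ^ 5) = 0"
proof -
  define P where "P = PiE {..<5::nat} (\<lambda>_. UNIV::int set)"
  have "(\<Sum>k<5::nat. (-1)^k * theta_const (of_int a / 5) ((2 * real k + 1) / 5) tau ^ 5)
      = (\<Sum>k<5::nat. infsum (\<lambda>p. (-1)^k * (\<Prod>j<5::nat. tm (of_int a / 5) ((2 * real k + 1) / 5) tau (p j))) P)"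
    unfolding P_def by (simp add: theta_pow5[OF assms(2)] infsum_cmult_right')
  also have "\<dots> = infsum (gfun a tau) P"
    unfolding gfun_def P_def
    by (rule infsum_sum_fin[THEN conjunct1, symmetric])
       (auto intro!: summable_on_cmult_right prod_summable[OF assms(2)])
  finally have S: "(\<Sum>k<5::nat. (-1)^k * theta_const (of_int a / 5) ((2 * real k + 1) / 5) tau ^ 5) = infsum (gfun a tau) P" .
  have "infsum (gfun a tau) P = infsum (\<lambda>p. - gfun a tau p) P"
    by (rule infsum_reindex_bij_witness[of P "sig a" "sig a"])
       (auto simp: P_def sig_inv sig_in g_anti[OF assms(1)])
  then have "infsum (gfun a tau) P = 0" by (simp add: infsum_uminus)
  with S show ?thesis by simp
qed

theorem theorem3p1:
  fixes tau :: complex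
  assumes "Im tau > 0"
  shows "theta_const (1/5) (1/5) tau ^ 5 - theta_const (1/5) (3/5) tau ^ 5
           + theta_const (1/5) 1 tau ^ 5 - theta_const (1/5) (7/5) tau ^ 5
           + theta_const (1/5) (9/5) tau ^ 5 = 0
       \<and> theta_const (3/5) (1/5) tau ^ 5 - theta_const (3/5) (3/5) tau ^ 5
           + theta_const (3/5) 1 tau ^ 5 - theta_const (3/5) (7/5) tau ^ 5
           + theta_const (3/5) (9/5) tau ^ 5 = 0"
proof
  show "theta_const (1/5) (1/5) tau ^ 5 - theta_const (1/5) (3/5) tau ^ 5
           + theta_const (1/5) 1 tau ^ 5 - theta_const (1/5) (7/5) tau ^ 5
           + theta_const (1/5) (9/5) tau ^ 5 = 0"
    using main5[of 1 tau] assms unfolding sum5 by simp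
  show "theta_const (3/5) (1/5) tau ^ 5 - theta_const (3/5) (3/5) tau ^ 5
           + theta_const (3/5) 1 tau ^ 5 - theta_const (3/5) (7/5) tau ^ 5
           + theta_const (3/5) (9/5) tau ^ 5 = 0"
    using main5[of 3 tau] assms unfolding sum5 by simp
qed

end
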